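(* Let $S\subseteq\mathbb{R}^n\times\mathbb{R}^m$ be convex, let (MOCP) be bounded and fix $p\in[1,\infty]$. If $\bar S\subseteq S$ is a Hausdorff-type finite $\epsilon$-solution of (MOCP), then $\bar S$ is a finite $(\|Q\|\epsilon)$-solution of (CP), where $\|Q\|=(m^{p-1}+1)^{1/p}$ (equal to $m$ for $p=\infty$).
   Context: $\|\cdot\|$ is the $p$-norm, $B_\epsilon$ its closed $\epsilon$-ball. (CP): compute $Y=\{y:\exists x,(x,y)\in S\}$; for bounded (CP) a nonempty finite $\bar S\subseteq S$ is a finite $\epsilon$-solution if $Y\subseteq\operatorname{conv}\operatorname{proj}_y[\bar S]+B_\epsilon$. $P(x,y)=(y,-\mathbf{1}^\top y)$, $Qy=(y,-\mathbf{1}^\top y)$, $\mathbf{1}\in\mathbb{R}^m$ all-ones; $\|Q\|$ is the operator norm induced by the $p$-norms. (MOCP): minimize $P(x,y)$ w.r.t. $\le_{\mathbb{R}^{m+1}_+}$ over $(x,y)\in S$, upper image $\mathcal{P}=\operatorname{cl}(P[S]+\mathbb{R}^{m+1}_+)$; bounded means $\mathcal{P}\subseteq\{q\}+\mathbb{R}^{m+1}_+$ for some $q$. Hausdorff distance $d_H(A_1,A_2)=\max\{\sup_{a_1\in A_1}\inf_{a_2\in A_2}\|a_1-a_2\|,\sup_{a_2\in A_2}\inf_{a_1\in A_1}\|a_1-a_2\|\}$. A nonempty finite $\bar S\subseteq S$ is a Hausdorff-type finite $\epsilon$-solution of (MOCP) if $d_H(\mathcal{P},\operatorname{conv}P[\bar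 S]+\mathbb{R}^{m+1}_+)\le\epsilon$. *)

theory Defs
  imports "HOL-Analysis.Analysis"
begin

definition pnorm :: "ereal \<Rightarrow> real^'k \<Rightarrow> real" where
  "pnorm p x = (if p = \<infinity> then Max (range (\<lambda>i. \<bar>x $ i\<bar>))
                else (\<Sum>i\<in>UNIV. \<bar>x $ i\<bar> powr real_of_ereal p) powr (1 / real_of_ereal p))"

text \<open>Objective maps. R^(m+1) is modelled as real^('m option); the index None is the extra
  coordinate carrying -1^T y.\<close>
definition Qmap :: "real^'m \<Rightarrow> real^('m option)" where
  "Qmap y = (\<chi> i. case i of Some j \<Rightarrow> y $ j | None \<Rightarrow> - (\<Sum>j\<in>UNIV. y $ j))"

definition Pmap :: "(real^'n) \<times> (real^'m) \<Rightarrow> real^('m option)" where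
  "Pmap xy = Qmap (snd xy)"

definition Qnorm :: "ereal \<Rightarrow> ('m::finite) itself \<Rightarrow> real" where
  "Qnorm p (_ :: ('m::finite) itself) =
     (SUP y \<in> {y :: real^'m. y \<noteq> 0}. pnorm p (Qmap y) / pnorm p y)"

definition Yset :: "((real^'n) \<times> (real^'m)) set \<Rightarrow> (real^'m) set" where
  "Yset S = {y. \<exists>x. (x, y) \<in> S}"

definition finite_eps_sol_CP ::
  "ereal \<Rightarrow> ((real^'n) \<times> (real^'m)) set \<Rightarrow> real \<Rightarrow> ((real^'n) \<times> (real^'m)) set \<Rightarrow> bool" where
  "finite_eps_sol_CP p S \<epsilon> Sb \<longleftrightarrow> finite Sb \<and> Sb \<noteq> {} \<and> Sb \<subseteq> S \<and>
     (\<forall>y \<in> Yset S. \<exists>z \<in> convex hull (snd ` Sb). pnorm p (y - z) \<le> \<epsilon>)"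

definition upper_image :: "((real^'n) \<times> (real^'m)) set \<Rightarrow> (real^('m option)) set" where
  "upper_image S = closure {u. \<exists>s \<in> S. \<forall>i. Pmap s $ i \<le> u $ i}"

definition MOCP_bounded :: "((real^'n) \<times> (real^'m)) set \<Rightarrow> bool" where
  "MOCP_bounded S \<longleftrightarrow> (\<exists>q. upper_image S \<subseteq> {u. \<forall>i. q $ i \<le> u $ i})"

definition hausdorff_p :: "ereal \<Rightarrow> (real^'k) set \<Rightarrow> (real^'k) set \<Rightarrow> ereal" where
  "hausdorff_p p A B = max (SUP a\<in>A. INF b\<in>B. ereal (pnorm p (a - b)))
                           (SUP b\<in>B. INF a\<in>A. ereal (pnorm p (a - b)))"

definition hausdorff_eps_sol_MOCP ::
  "ereal \<Rightarrow> ((real^'n) \<times> (real^'m)) set \<Rightarrow> real \<Rightarrow> ((real^'n) \<times> (real^'m)) set \<Rightarrow> bool" where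
  "hausdorff_eps_sol_MOCP p S \<epsilon> Sb \<longleftrightarrow> finite Sb \<and> Sb \<noteq> {} \<and> Sb \<subseteq> S \<and>
     hausdorff_p p (upper_image S)
       {u. \<exists>v \<in> convex hull (Pmap ` Sb). \<forall>i. v $ i \<le> u $ i} \<le> ereal \<epsilon>"

end

theory Submission
  imports Defs
begin

lemma abs_powr_convex:
  fixes p :: real assumes p: "p \<ge> 1"
  shows "convex_on UNIV (\<lambda>x::real. \<bar>x\<bar> powr p)"
proof (rule convex_onI)
  fix t x y :: real assume t: "0 < t" "t < 1"
  define a where "a = \<bar>x\<bar>" define b where "b = \<bar>y\<bar>"
  have ab: "a \<ge> 0" "b \<ge> 0" by (auto simp: a_def b_def)
  have "\<bar>(1 - t) *\<^sub>R x + t *\<^sub>R y\<bar> \<le> (1-t)*a + t*b"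
  proof -
    have "\<bar>(1 - t) * x + t * y\<bar> \<le> \<bar>(1 - t) * x\<bar> + \<bar>t * y\<bar>" by (rule abs_triangle_ineq)
    also have "\<dots> = (1-t)*a + t*b" using t by (simp add: a_def b_def abs_mult)
    finally show ?thesis by simp
  qed
  hence "\<bar>(1 - t) *\<^sub>R x + t *\<^sub>R y\<bar> powr p \<le> ((1-t)*a + t*b) powr p"
    using p by (intro powr_mono2) auto
  also have "\<dots> \<le> (1-t) * a powr p + t * b powr p"
  proof (cases "a > 0 \<and> b > 0")
    case True
    have "convex_on {0<..} (\<lambda>x::real. x powr p)" by (rule powr_convex[OF p])
    from convex_onD[OF this, of t a b] True t show ?thesis by auto
  next
    case False
    have tp: "t powr p \<le> t" "(1-t) powr p \<le> 1 - t"
      using powr_mono'[of 1 p t] powr_mono'[of 1 p "1-t"] t p by auto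
    have p0: "0 powr p = (0::real)" using p by simp
    show ?thesis
    proof (cases "a = 0")
      case True
      have "((1-t)*a + t*b) powr p = t powr p * b powr p" using True t ab by (simp add: powr_mult)
      also have "\<dots> \<le> t * b powr p" using tp by (intro mult_right_mono) auto
      finally show ?thesis using True p0 by simp
    next
      case False
      with \<open>\<not> (a > 0 \<and> b > 0)\<close> ab have b0: "b = 0" by auto
      have "((1-t)*a + t*b) powr p = (1-t) powr p * a powr p" using b0 t ab by (simp add: powr_mult)
      also have "\<dots> \<le> (1-t) * a powr p" using tp by (intro mult_right_mono) auto
      finally show ?thesis using b0 p0 by simp
    qed
  qed
  finally show "\<bar>(1 - t) *\<^sub>R x + t *\<^sub>R y\<bar> powr p \<le> (1 - t) * \<bar>x\<bar> powr p + t * \<bar>y\<bar> powr p"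
    by (simp add: a_def b_def)
qed simp

lemma power_mean:
  fixes f :: "'a \<Rightarrow> real" and p :: real
  assumes p: "p \<ge> 1" and A: "finite A" "A \<noteq> {}"
  shows "\<bar>\<Sum>i\<in>A. f i\<bar> powr p \<le> real (card A) powr (p - 1) * (\<Sum>i\<in>A. \<bar>f i\<bar> powr p)"
proof -
  define n where "n = real (card A)"
  have n: "n > 0" using A by (simp add: n_def card_gt_0_iff)
  have "\<bar>\<Sum>i\<in>A. (1/n) *\<^sub>R f i\<bar> powr p \<le> (\<Sum>i\<in>A. (1/n) * \<bar>f i\<bar> powr p)"
    by (rule convex_on_sum[OF A abs_powr_convex[OF p]]) (use n in \<open>auto simp: n_def\<close>)
  hence "(\<bar>\<Sum>i\<in>A. f i\<bar> / n) powr p \<le> (1/n) * (\<Sum>i\<in>A. \<bar>f i\<bar> powr p)"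
    using n by (simp add: sum_distrib_left[symmetric] abs_mult sum_divide_distrib[symmetric])
  hence "\<bar>\<Sum>i\<in>A. f i\<bar> powr p / n powr p \<le> (\<Sum>i\<in>A. \<bar>f i\<bar> powr p) / n"
    using n by (simp add: powr_divide)
  hence "\<bar>\<Sum>i\<in>A. f i\<bar> powr p \<le> (\<Sum>i\<in>A. \<bar>f i\<bar> powr p) / n * n powr p"
    using n by (simp add: pos_divide_le_eq)
  also have "\<dots> = (n powr p / n) * (\<Sum>i\<in>A. \<bar>f i\<bar> powr p)" by simp
  also have "n powr p / n = n powr (p - 1)" using n by (simp add: powr_diff)
  finally show ?thesis by (simp add: n_def)
qed



lemma sum_option_UNIV:
  "(\<Sum>i\<in>(UNIV::'a::finite option set). g i) = g None + (\<Sum>j\<in>UNIV. g (Some j))"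
proof -
  have U: "(UNIV::'a option set) = insert None (range Some)" by (auto intro: option.exhaust)
  show ?thesis unfolding U by (subst sum.insert) (auto simp: sum.reindex)
qed

lemma Qmap_Some[simp]: "Qmap y $ Some j = y $ j" by (simp add: Qmap_def)
lemma Qmap_None[simp]: "Qmap y $ None = - (\<Sum>j\<in>UNIV. y $ j)" by (simp add: Qmap_def)

lemma Qmap_sum: "(\<Sum>i\<in>UNIV. Qmap y $ i) = 0"
  by (simp add: sum_option_UNIV)

lemma linear_Qmap: "linear Qmap"
  by (rule linearI) (auto simp: vec_eq_iff Qmap_def sum.distrib sum_distrib_left split: option.splits)

lemma pnorm_fin: "pnorm (ereal r) x = (\<Sum>i\<in>UNIV. \<bar>x $ i\<bar> powr r) powr (1 / r)"
  by (simp add: pnorm_def)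

lemma pnorm_inf: "pnorm \<infinity> x = Max (range (\<lambda>i. \<bar>x $ i\<bar>))"
  by (simp add: pnorm_def)

lemma card_minus_Some: "card ((UNIV::'a::finite option set) - {Some j}) = CARD('a)"
  by (simp add: card_UNIV_option)

lemma convex_step:
  fixes r a d T :: real
  assumes r: "r \<ge> 1" and d: "0 \<le> d" "d \<le> T"
  shows "\<bar>a + d\<bar> powr r \<le> \<bar>a\<bar> powr r + (d / T) * (\<bar>a + T\<bar> powr r - \<bar>a\<bar> powr r)"
proof (cases "T = 0")
  case True then show ?thesis using d by simp
next
  case False
  hence T: "T > 0" using d by simp
  define l where "l = d / T"
  have l: "0 \<le> l" "l \<le> 1" using d T by (auto simp: l_def)
  have e: "a + d = (1 - l) *\<^sub>R a + l *\<^sub>R (a + T)" using T by (simp add: l_def field_simps)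
  have "\<bar>(1 - l) *\<^sub>R a + l *\<^sub>R (a + T)\<bar> powr r \<le> (1 - l) * \<bar>a\<bar> powr r + l * \<bar>a + T\<bar> powr r"
    using convex_onD[OF abs_powr_convex[OF r] l] by simp
  thus ?thesis unfolding e by (simp add: l_def algebra_simps)
qed

lemma key_fin:
  fixes u :: "real^'m" and w :: "real^('m option)" and r :: real
  assumes r: "r \<ge> 1" and le: "\<And>i. w $ i \<le> Qmap u $ i"
  shows "(\<Sum>j\<in>UNIV. \<bar>u $ j\<bar> powr r) \<le> (1 + real CARD('m) powr (r - 1)) * (\<Sum>i\<in>UNIV. \<bar>w $ i\<bar> powr r)"
proof -
  define m where "m = real CARD('m)"
  define d where "d i = Qmap u $ i - w $ i" for i
  define T where "T = (\<Sum>i\<in>UNIV. d i)"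
  define W where "W = (\<Sum>i\<in>UNIV. \<bar>w $ i\<bar> powr r)"
  have d0: "d i \<ge> 0" for i using le[of i] by (simp add: d_def)
  have T_eq: "T = - (\<Sum>i\<in>UNIV. w $ i)"
    using Qmap_sum[of u] by (simp add: T_def d_def sum_subtractf)
  have Tsplit: "T = d None + (\<Sum>j\<in>UNIV. d (Some j))" by (simp add: T_def sum_option_UNIV)
  have W0: "W \<ge> 0" by (simp add: W_def sum_nonneg)
  have Wsplit: "W = \<bar>w $ None\<bar> powr r + (\<Sum>j\<in>UNIV. \<bar>w $ Some j\<bar> powr r)"
    by (simp add: W_def sum_option_UNIV)
  have dle: "d (Some j) \<le> T" for j
    unfolding T_def by (rule member_le_sum) (auto simp: d0)
  have uj: "u $ j = w $ Some j + d (Some j)" for j by (simp add: d_def)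
  have bound: "\<bar>w $ Some j + T\<bar> powr r \<le> m powr (r - 1) * W" for j
  proof -
    have "(\<Sum>i\<in>UNIV. w $ i) = w $ Some j + (\<Sum>i\<in>UNIV - {Some j}. w $ i)"
      by (simp add: sum.remove)
    hence "w $ Some j + T = - (\<Sum>i\<in>UNIV - {Some j}. w $ i)" using T_eq by simp
    hence "\<bar>w $ Some j + T\<bar> powr r = \<bar>\<Sum>i\<in>UNIV - {Some j}. w $ i\<bar> powr r" by simp
    also have "\<dots> \<le> real (card ((UNIV::'m option set) - {Some j})) powr (r - 1) * (\<Sum>i\<in>UNIV - {Some j}. \<bar>w $ i\<bar> powr r)"
      by (rule power_mean[OF r]) auto
    also have "\<dots> \<le> m powr (r - 1) * W"
      unfolding card_minus_Some m_def[symmetric] W_def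
      by (intro mult_left_mono sum_mono2) auto
    finally show ?thesis .
  qed
  have step: "\<bar>u $ j\<bar> powr r \<le> \<bar>w $ Some j\<bar> powr r + (d (Some j) / T) * (m powr (r - 1) * W)" for j
  proof -
    have "\<bar>u $ j\<bar> powr r \<le> \<bar>w $ Some j\<bar> powr r + (d (Some j) / T) * (\<bar>w $ Some j + T\<bar> powr r - \<bar>w $ Some j\<bar> powr r)"
      unfolding uj by (rule convex_step[OF r d0 dle])
    also have "\<dots> \<le> \<bar>w $ Some j\<bar> powr r + (d (Some j) / T) * (m powr (r - 1) * W)"
      using bound[of j] d0[of "Some j"] dle[of j] powr_ge_zero[of "\<bar>w $ Some j\<bar>" r]
      by (intro add_left_mono mult_left_mono) (auto simp del: powr_ge_zero)
    finally show ?thesis .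
  qed
  have "(\<Sum>j\<in>UNIV. \<bar>u $ j\<bar> powr r) \<le> (\<Sum>j\<in>UNIV. \<bar>w $ Some j\<bar> powr r + (d (Some j) / T) * (m powr (r - 1) * W))"
    by (rule sum_mono) (rule step)
  also have "\<dots> = (\<Sum>j\<in>UNIV. \<bar>w $ Some j\<bar> powr r) + ((\<Sum>j\<in>UNIV. d (Some j)) / T) * (m powr (r - 1) * W)"
    by (simp add: sum.distrib sum_distrib_right sum_divide_distrib)
  also have "\<dots> \<le> W + 1 * (m powr (r - 1) * W)"
  proof (intro add_mono mult_right_mono)
    show "(\<Sum>j\<in>UNIV. \<bar>w $ Some j\<bar> powr r) \<le> W" using Wsplit by simp
    show "(\<Sum>j\<in>UNIV. d (Some j)) / T \<le> 1"
    proof (cases "T = 0")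
      case False
      have "(\<Sum>j\<in>UNIV. d (Some j)) \<ge> 0" by (rule sum_nonneg) (simp add: d0)
      hence "T > 0" using False Tsplit d0[of None] by linarith
      thus ?thesis using Tsplit d0[of None] by (simp add: divide_le_eq_1)
    qed simp
    show "0 \<le> m powr (r - 1) * W" using W0 by simp
  qed
  also have "\<dots> = (1 + m powr (r - 1)) * W" by (simp add: algebra_simps)
  finally show ?thesis by (simp add: m_def W_def)
qed

definition Cf :: "ereal \<Rightarrow> nat \<Rightarrow> real" where
  "Cf p m = (if p = \<infinity> then real m
              else (real m powr (real_of_ereal p - 1) + 1) powr (1 / real_of_ereal p))"

lemma ereal_ge1_cases:
  assumes "1 \<le> p" obtains "p = \<infinity>" | r where "p = ereal r" "r \<ge> 1"
  using assms by (cases p) auto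

lemma abs_le_Max: fixes x :: "real^'k" shows "\<bar>x $ i\<bar> \<le> Max (range (\<lambda>i. \<bar>x $ i\<bar>))"
  by (rule Max_ge) (rule finite_imageI, simp, rule rangeI)
lemma Max_nonneg: fixes x :: "real^'k" shows "0 \<le> Max (range (\<lambda>i. \<bar>x $ i\<bar>))"
  using abs_le_Max[of x undefined] abs_ge_zero[of "x $ undefined"] by linarith

lemma key_inf:
  fixes u :: "real^'m" and w :: "real^('m option)"
  assumes le: "\<And>i. w $ i \<le> Qmap u $ i"
  shows "Max (range (\<lambda>j. \<bar>u $ j\<bar>)) \<le> real CARD('m) * Max (range (\<lambda>i. \<bar>w $ i\<bar>))"
proof -
  define M where "M = Max (range (\<lambda>i. \<bar>w $ i\<bar>))"
  have M: "\<bar>w $ i\<bar> \<le> M" for i unfolding M_def by (rule abs_le_Max)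
  have M0: "M \<ge> 0" unfolding M_def by (rule Max_nonneg)
  have m1: "real CARD('m) \<ge> 1" by simp
  have bnd: "\<bar>u $ j\<bar> \<le> real CARD('m) * M" for j
  proof -
  have lo: "u $ j \<ge> - (real CARD('m) * M)"
  proof -
    have "u $ j \<ge> w $ Some j" using le[of "Some j"] by simp
    moreover have "w $ Some j \<ge> - M" using M[of "Some j"] by simp
    moreover have "M \<le> real CARD('m) * M" using M0 m1 by (simp add: mult_le_cancel_right1)
    ultimately show ?thesis by linarith
  qed
  have hi: "u $ j \<le> real CARD('m) * M"
  proof -
    have "(\<Sum>i\<in>UNIV. Qmap u $ i) = Qmap u $ Some j + (\<Sum>i\<in>UNIV - {Some j}. Qmap u $ i)"
      by (rule sum.remove) auto
    hence "u $ j = - (\<Sum>i\<in>UNIV - {Some j}. Qmap u $ i)" using Qmap_sum[of u] by simp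
    also have "\<dots> \<le> - (\<Sum>i\<in>UNIV - {Some j}. w $ i)" using le by (simp add: sum_mono)
    also have "\<dots> \<le> (\<Sum>i\<in>UNIV - {Some j}. \<bar>w $ i\<bar>)"
      by (metis abs_ge_minus_self order_trans sum_abs)
    also have "\<dots> \<le> real (card ((UNIV::'m option set) - {Some j})) * M"
      using M by (intro sum_bounded_above) auto
    finally show ?thesis by (simp add: card_minus_Some)
  qed
  show ?thesis using lo hi unfolding abs_le_iff by linarith
  qed
  have f: "finite (range (\<lambda>j. \<bar>u $ j\<bar>))" by simp
  have ne: "range (\<lambda>j. \<bar>u $ j\<bar>) \<noteq> {}" by simp
  have "\<And>a. a \<in> range (\<lambda>j. \<bar>u $ j\<bar>) \<Longrightarrow> a \<le> real CARD('m) * M"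
  proof -
    fix a assume "a \<in> range (\<lambda>j. \<bar>u $ j\<bar>)"
    then obtain j where "a = \<bar>u $ j\<bar>" by (rule rangeE)
    thus "a \<le> real CARD('m) * M" using bnd[of j] by (simp only:)
  qed
  note X = Max.boundedI[OF f ne this]
  show ?thesis using X by (simp only: M_def)
qed

lemma pnorm_key:
  fixes u :: "real^'m" and w :: "real^('m option)"
  assumes p: "1 \<le> p" and le: "\<And>i. w $ i \<le> Qmap u $ i"
  shows "pnorm p u \<le> Cf p CARD('m) * pnorm p w"
  using p
proof (cases rule: ereal_ge1_cases)
  case 1
  have c: "Cf \<infinity> CARD('m) = real CARD('m)" by (simp add: Cf_def)
  show ?thesis unfolding 1 pnorm_inf c by (rule key_inf[OF le])
next
  case (2 r)
  have r0: "0 \<le> 1 / r" using 2 by simp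
  have "pnorm p u = (\<Sum>j\<in>UNIV. \<bar>u $ j\<bar> powr r) powr (1 / r)" using 2 by (simp add: pnorm_fin)
  also have "\<dots> \<le> ((1 + real CARD('m) powr (r - 1)) * (\<Sum>i\<in>UNIV. \<bar>w $ i\<bar> powr r)) powr (1 / r)"
    by (intro powr_mono2 r0 key_fin 2 le sum_nonneg) auto
  also have "\<dots> = Cf p CARD('m) * pnorm p w"
    using 2 by (simp add: pnorm_fin Cf_def powr_mult add.commute sum_nonneg)
  finally show ?thesis .
qed

lemma Qmap_bound:
  fixes y :: "real^'m"
  assumes p: "1 \<le> p"
  shows "pnorm p (Qmap y) \<le> Cf p CARD('m) * pnorm p y"
  using p
proof (cases rule: ereal_ge1_cases)
  case 1
  define M where "M = Max (range (\<lambda>j. \<bar>y $ j\<bar>))"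
  have M: "\<bar>y $ j\<bar> \<le> M" for j unfolding M_def by (rule abs_le_Max)
  have M0: "M \<ge> 0" unfolding M_def by (rule Max_nonneg)
  have m1: "real CARD('m) \<ge> 1" by simp
  have mM: "M \<le> real CARD('m) * M" using M0 m1 by (simp add: mult_le_cancel_right1)
  have bnd: "\<bar>Qmap y $ i\<bar> \<le> real CARD('m) * M" for i
  proof (cases i)
    case None
    have "\<bar>\<Sum>j\<in>UNIV. y $ j\<bar> \<le> (\<Sum>j\<in>UNIV. \<bar>y $ j\<bar>)" by (rule sum_abs)
    also have "\<dots> \<le> real (card (UNIV::'m set)) * M" using M by (intro sum_bounded_above) auto
    finally show ?thesis using None by simp
  next
    case (Some j)
    show ?thesis using Some M[of j] mM by simp
  qed
  have f: "finite (range (\<lambda>i. \<bar>Qmap y $ i\<bar>))" by (rule finite_imageI) simp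
  have ne: "range (\<lambda>i. \<bar>Qmap y $ i\<bar>) \<noteq> {}" by simp
  have "\<And>a. a \<in> range (\<lambda>i. \<bar>Qmap y $ i\<bar>) \<Longrightarrow> a \<le> real CARD('m) * M"
  proof -
    fix a assume "a \<in> range (\<lambda>i. \<bar>Qmap y $ i\<bar>)"
    then obtain i where "a = \<bar>Qmap y $ i\<bar>" by (rule rangeE)
    thus "a \<le> real CARD('m) * M" using bnd[of i] by (simp only:)
  qed
  note X = Max.boundedI[OF f ne this]
  have c: "Cf \<infinity> CARD('m) = real CARD('m)" by (simp add: Cf_def)
  show ?thesis unfolding 1 pnorm_inf c using X by (simp only: M_def)
next
  case (2 r)
  have r0: "0 \<le> 1 / r" using 2 by simp
  define Y where "Y = (\<Sum>j\<in>UNIV. \<bar>y $ j\<bar> powr r)"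
  have Y0: "Y \<ge> 0" by (simp add: Y_def sum_nonneg)
  have "(\<Sum>i\<in>UNIV. \<bar>Qmap y $ i\<bar> powr r) = \<bar>\<Sum>j\<in>UNIV. y $ j\<bar> powr r + Y"
    by (simp add: sum_option_UNIV Y_def)
  also have "\<dots> \<le> real (card (UNIV::'m set)) powr (r - 1) * Y + Y"
    unfolding Y_def using 2 by (intro add_right_mono power_mean) auto
  finally have le: "(\<Sum>i\<in>UNIV. \<bar>Qmap y $ i\<bar> powr r) \<le> (real CARD('m) powr (r - 1) + 1) * Y"
    by (simp add: algebra_simps)
  have "pnorm p (Qmap y) = (\<Sum>i\<in>UNIV. \<bar>Qmap y $ i\<bar> powr r) powr (1 / r)" using 2 by (simp add: pnorm_fin)
  also have "\<dots> \<le> ((real CARD('m) powr (r - 1) + 1) * Y) powr (1 / r)"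
    by (intro powr_mono2 r0 le sum_nonneg) auto
  also have "\<dots> = Cf p CARD('m) * pnorm p y"
    using 2 Y0 by (simp add: pnorm_fin Cf_def powr_mult Y_def)
  finally show ?thesis .
qed

lemma pnorm_pos:
  fixes y :: "real^'m"
  assumes p: "1 \<le> p" and y: "y \<noteq> 0"
  shows "pnorm p y > 0"
proof -
  obtain j where j: "y $ j \<noteq> 0" using y by (auto simp: vec_eq_iff)
  show ?thesis using p
  proof (cases rule: ereal_ge1_cases)
    case 1
    show ?thesis unfolding 1 pnorm_inf using abs_le_Max[of y j] j by linarith
  next
    case (2 r)
    have "\<bar>y $ j\<bar> powr r \<le> (\<Sum>i\<in>UNIV. \<bar>y $ i\<bar> powr r)"
      by (rule member_le_sum) auto
    moreover have "\<bar>y $ j\<bar> powr r > 0" using j by simp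
    ultimately have "(\<Sum>i\<in>UNIV. \<bar>y $ i\<bar> powr r) > 0" by linarith
    thus ?thesis using 2 by (simp add: pnorm_fin)
  qed
qed

lemma Qmap_attain:
  assumes p: "1 \<le> p"
  shows "pnorm p (Qmap (\<chi> i. 1 :: real^'m)) / pnorm p (\<chi> i. 1 :: real^'m) = Cf p CARD('m)"
  using p
proof (cases rule: ereal_ge1_cases)
  case 1
  have r1: "range (\<lambda>i. \<bar>(\<chi> i. 1 :: real^'m) $ i\<bar>) = {1}" by auto
  have "Max (range (\<lambda>i. \<bar>Qmap (\<chi> i. 1 :: real^'m) $ i\<bar>)) = real CARD('m)"
  proof (rule Max_eqI)
    show "finite (range (\<lambda>i. \<bar>Qmap (\<chi> i. 1 :: real^'m) $ i\<bar>))" by (rule finite_imageI) simp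
    show "real CARD('m) \<in> range (\<lambda>i. \<bar>Qmap (\<chi> i. 1 :: real^'m) $ i\<bar>)"
      by (rule range_eqI[of _ _ None]) simp
    fix a assume "a \<in> range (\<lambda>i. \<bar>Qmap (\<chi> i. 1 :: real^'m) $ i\<bar>)"
    then obtain i where a: "a = \<bar>Qmap (\<chi> i. 1 :: real^'m) $ i\<bar>" by (rule rangeE)
    show "a \<le> real CARD('m)" unfolding a by (cases i) auto
  qed
  thus ?thesis unfolding 1 pnorm_inf r1 by (simp add: Cf_def)
next
  case (2 r)
  define m where "m = real CARD('m)"
  have m: "m > 0" by (simp add: m_def)
  have s1: "(\<Sum>i\<in>UNIV. \<bar>(\<chi> i. 1 :: real^'m) $ i\<bar> powr r) = m" by (simp add: m_def)
  have s2: "(\<Sum>i\<in>UNIV. \<bar>Qmap (\<chi> i. 1 :: real^'m) $ i\<bar> powr r) = m powr r + m"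
    by (simp add: sum_option_UNIV m_def)
  have "(m powr r + m) powr (1 / r) / m powr (1 / r) = ((m powr r + m) / m) powr (1 / r)"
    using m by (simp add: powr_divide)
  also have "(m powr r + m) / m = m powr (r - 1) + 1" using m by (simp add: powr_diff field_simps)
  finally show ?thesis using 2 s1 s2 by (simp add: pnorm_fin Cf_def m_def)
qed

lemma Qnorm_eq:
  assumes p: "1 \<le> p"
  shows "Qnorm p TYPE('m::finite) = Cf p CARD('m)"
proof -
  have "Sup ((\<lambda>y. pnorm p (Qmap y) / pnorm p y) ` {y :: real^'m. y \<noteq> 0}) = Cf p CARD('m)"
  proof (rule cSup_eq_maximum)
    have "(\<chi> i. 1 :: real^'m) \<noteq> 0" by (simp add: vec_eq_iff)
    thus "Cf p CARD('m) \<in> (\<lambda>y. pnorm p (Qmap y) / pnorm p y) ` {y :: real^'m. y \<noteq> 0}"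
      using Qmap_attain[OF p] by (metis (mono_tags, lifting) image_eqI mem_Collect_eq)
    fix x assume "x \<in> (\<lambda>y. pnorm p (Qmap y) / pnorm p y) ` {y :: real^'m. y \<noteq> 0}"
    then obtain y :: "real^'m" where y: "y \<noteq> 0" "x = pnorm p (Qmap y) / pnorm p y" by auto
    show "x \<le> Cf p CARD('m)" unfolding y(2) using pnorm_pos[OF p y(1)] Qmap_bound[OF p, of y]
      by (simp add: divide_le_eq)
  qed
  thus ?thesis by (simp add: Qnorm_def)
qed

lemma pnorm_cont:
  assumes p: "1 \<le> p"
  shows "continuous_on UNIV (pnorm p :: real^'k \<Rightarrow> real)"
  using p
proof (cases rule: ereal_ge1_cases)
  case 1
  have le: "pnorm \<infinity> a \<le> pnorm \<infinity> b + dist a b" for a b :: "real^'k"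
  proof -
    have f: "finite (range (\<lambda>i. \<bar>a $ i\<bar>))" by (rule finite_imageI) simp
    have ne: "range (\<lambda>i. \<bar>a $ i\<bar>) \<noteq> {}" by simp
    have "\<And>x. x \<in> range (\<lambda>i. \<bar>a $ i\<bar>) \<Longrightarrow> x \<le> pnorm \<infinity> b + dist a b"
    proof -
      fix x assume "x \<in> range (\<lambda>i. \<bar>a $ i\<bar>)"
      then obtain i where x: "x = \<bar>a $ i\<bar>" by (rule rangeE)
      have "\<bar>a $ i\<bar> \<le> \<bar>b $ i\<bar> + \<bar>(a - b) $ i\<bar>" by simp
      moreover have "\<bar>(a - b) $ i\<bar> \<le> dist a b" unfolding dist_norm by (rule component_le_norm_cart)
      moreover have "\<bar>b $ i\<bar> \<le> pnorm \<infinity> b" unfolding pnorm_inf by (rule abs_le_Max)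
      ultimately show "x \<le> pnorm \<infinity> b + dist a b" unfolding x by linarith
    qed
    from Max.boundedI[OF f ne this] show ?thesis unfolding pnorm_inf .
  qed
  have "1-lipschitz_on UNIV (pnorm \<infinity> :: real^'k \<Rightarrow> real)"
  proof (rule lipschitz_onI)
    fix a b :: "real^'k"
    show "dist (pnorm \<infinity> a) (pnorm \<infinity> b) \<le> 1 * dist a b"
      using le[of a b] le[of b a] by (simp add: dist_real_def dist_commute abs_le_iff)
  qed simp
  thus ?thesis unfolding 1 by (rule lipschitz_on_continuous_on)
next
  case (2 r)
  have e: "pnorm p = (\<lambda>x::real^'k. (\<Sum>i\<in>UNIV. \<bar>x $ i\<bar> powr r) powr (1 / r))"
    using 2 by (simp add: pnorm_fin fun_eq_iff)
  show ?thesis unfolding e using 2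
    by (intro continuous_on_powr' continuous_on_sum continuous_intros) (auto simp: sum_nonneg)
qed

theorem mainTheorem17:
  fixes S Sb :: "((real^'n) \<times> (real^'m)) set" and p :: ereal and \<epsilon> :: real
  assumes "convex S"
    and "MOCP_bounded S"
    and "1 \<le> p"
    and "hausdorff_eps_sol_MOCP p S \<epsilon> Sb"
  shows "finite_eps_sol_CP p S (Qnorm p TYPE('m) * \<epsilon>) Sb
         \<and> Qnorm p TYPE('m) = (if p = \<infinity> then real CARD('m)
              else (real CARD('m) powr (real_of_ereal p - 1) + 1) powr (1 / real_of_ereal p))"
proof -
  note p = assms(3)
  have QC: "Qnorm p TYPE('m) = Cf p CARD('m)" by (rule Qnorm_eq[OF p])
  define C where "C = Cf p CARD('m)"
  have Cpos: "C > 0"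
  proof -
    have n1: "(\<chi> i. 1 :: real^'m) \<noteq> 0" by (simp add: vec_eq_iff)
    have n2: "Qmap (\<chi> i. 1 :: real^'m) \<noteq> 0"
    proof
      assume "Qmap (\<chi> i. 1 :: real^'m) = 0"
      hence "Qmap (\<chi> i. 1 :: real^'m) $ Some undefined = 0" by simp
      thus False by simp
    qed
    have "pnorm p (\<chi> i. 1 :: real^'m) > 0" "pnorm p (Qmap (\<chi> i. 1 :: real^'m)) > 0"
      using pnorm_pos[OF p n1] pnorm_pos[OF p n2] by auto
    hence "pnorm p (Qmap (\<chi> i. 1 :: real^'m)) / pnorm p (\<chi> i. 1 :: real^'m) > 0" by simp
    thus ?thesis using Qmap_attain[OF p, where 'm='m] by (simp add: C_def)
  qed
  from assms(4) have fin: "finite Sb" and ne: "Sb \<noteq> {}" and sub: "Sb \<subseteq> S"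
    and H: "hausdorff_p p (upper_image S)
       {u. \<exists>v \<in> convex hull (Pmap ` Sb). \<forall>i. v $ i \<le> u $ i} \<le> ereal \<epsilon>"
    by (auto simp: hausdorff_eps_sol_MOCP_def)
  define K where "K = convex hull (snd ` Sb)"
  define Hs where "Hs = {u. \<exists>v \<in> convex hull (Pmap ` Sb). \<forall>i. v $ i \<le> u $ i}"
  have PK: "convex hull (Pmap ` Sb) = Qmap ` K"
  proof -
    have "Pmap ` Sb = Qmap ` (snd ` Sb)" by (auto simp: Pmap_def)
    thus ?thesis unfolding K_def using convex_hull_linear_image[OF linear_Qmap, of "snd ` Sb"] by simp
  qed
  have approx: "\<exists>z\<in>K. pnorm p (y - z) \<le> C * (\<epsilon> + \<delta>)" if y: "y \<in> Yset S" and d: "\<delta> > 0" for y \<delta>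
  proof -
    obtain x where xy: "(x, y) \<in> S" using y by (auto simp: Yset_def)
    have "Qmap y \<in> upper_image S"
      unfolding upper_image_def
      by (rule closure_subset[THEN subsetD]) (use xy in \<open>auto simp: Pmap_def intro!: bexI[of _ "(x, y)"]\<close>)
    hence "(INF b\<in>Hs. ereal (pnorm p (Qmap y - b))) \<le> ereal \<epsilon>"
      using H unfolding hausdorff_p_def Hs_def[symmetric]
      by (meson SUP_upper max.bounded_iff order_trans)
    also have "\<dots> < ereal (\<epsilon> + \<delta>)" using d by simp
    finally obtain b where b: "b \<in> Hs" and bl: "ereal (pnorm p (Qmap y - b)) < ereal (\<epsilon> + \<delta>)"
      by (auto simp: INF_less_iff)
    from b obtain v where v: "v \<in> Qmap ` K" and vb: "\<And>i. v $ i \<le> b $ i"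
      unfolding Hs_def PK by auto
    then obtain z where z: "z \<in> K" and vz: "v = Qmap z" by auto
    have le: "(Qmap y - b) $ i \<le> Qmap (y - z) $ i" for i
      using vb[of i] unfolding vz by (cases i) (auto simp: sum_subtractf)
    have "pnorm p (y - z) \<le> C * pnorm p (Qmap y - b)"
      unfolding C_def by (rule pnorm_key[OF p le])
    also have "\<dots> \<le> C * (\<epsilon> + \<delta>)" using bl Cpos by (intro mult_left_mono) auto
    finally show ?thesis using z by blast
  qed
  have Kc: "compact K" unfolding K_def by (intro compact_convex_hull finite_imp_compact) (use fin in auto)
  have Kne: "K \<noteq> {}" unfolding K_def using ne by simp
  have CP: "\<forall>y\<in>Yset S. \<exists>z\<in>K. pnorm p (y - z) \<le> C * \<epsilon>"
  proof
    fix y assume y: "y \<in> Yset S"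
    have cont: "continuous_on K (\<lambda>z. pnorm p (y - z))"
    proof -
      have c1: "continuous_on K (\<lambda>z. y - z)" by (intro continuous_intros)
      have c2: "continuous_on ((\<lambda>z. y - z) ` K) (pnorm p)"
        by (rule continuous_on_subset[OF pnorm_cont[OF p]]) simp
      show ?thesis using continuous_on_compose[OF c1 c2] by (simp add: o_def)
    qed
    obtain z0 where z0: "z0 \<in> K" and min: "\<And>z. z \<in> K \<Longrightarrow> pnorm p (y - z0) \<le> pnorm p (y - z)"
      using continuous_attains_inf[OF Kc Kne cont] by blast
    have "pnorm p (y - z0) \<le> C * \<epsilon>"
    proof (rule field_le_epsilon)
      fix e :: real assume e: "e > 0"
      obtain z where z: "z \<in> K" "pnorm p (y - z) \<le> C * (\<epsilon> + e / C)"
        using approx[OF y, of "e / C"] e Cpos by auto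
      have "C * (\<epsilon> + e / C) = C * \<epsilon> + e" using Cpos by (simp add: field_simps)
      thus "pnorm p (y - z0) \<le> C * \<epsilon> + e" using min[OF z(1)] z(2) by linarith
    qed
    thus "\<exists>z\<in>K. pnorm p (y - z) \<le> C * \<epsilon>" using z0 by blast
  qed
  show ?thesis
    unfolding QC finite_eps_sol_CP_def using fin ne sub CP
    by (simp add: K_def C_def Cf_def)
qed

end
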